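(* Let $n\ge2$, $k\ge0$, $\nu_1,\ldots,\nu_n>0$. The map \[ CK_n^{BG}(p)=\Gamma(2\nu_n)\sum_{j=0}^k\frac{\big(-x_nL_-^{[n-1]}\big)^j}{j!\,\Gamma(j+2\nu_n)}\,p,\qquad p\in\mathcal{P}_k(\mathbb{R}^{n-1}), \] is an isomorphism of vector spaces from $\mathcal{P}_k(\mathbb{R}^{n-1})$ onto $\mathcal{H}^{BG}_k(\mathbb{R}^n)$.
   Context: $\mathcal{P}_k(\mathbb{R}^m)$ is the space of real homogeneous polynomials of degree $k$ in $x_1,\ldots,x_m$. For $m\le n$, $L_-^{[m]}=\sum_{j=1}^m\big(x_j\partial_{x_j}^2+2\nu_j\partial_{x_j}\big)$. $\mathcal{H}^{BG}_k(\mathbb{R}^n)=\mathcal{P}_k(\mathbb{R}^n)\cap\ker L_-^{[n]}$. *)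

theory Defs
  imports "HOL-Analysis.Analysis" "HOL-Library.Poly_Mapping"
begin

text \<open>Real polynomials in the variables x_1, x_2, ... are represented by their coefficient
  maps: a monomial x^alpha is an exponent vector alpha :: nat =>0 nat (variables indexed
  from 1), and a polynomial is a finitely supported map from monomials to real coefficients.\<close>

type_synonym rpoly = "(nat \<Rightarrow>\<^sub>0 nat) \<Rightarrow>\<^sub>0 real"

definition pscale :: "real \<Rightarrow> rpoly \<Rightarrow> rpoly" where
  "pscale c p = Poly_Mapping.map (\<lambda>a. c * a) p"

definition pderiv_var :: "nat \<Rightarrow> rpoly \<Rightarrow> rpoly" where
  "pderiv_var j p = (\<Sum>\<alpha>\<in>Poly_Mapping.keys p.
     Poly_Mapping.single (\<alpha> - Poly_Mapping.single j 1) (of_nat (Poly_Mapping.lookup \<alpha> j) * Poly_Mapping.lookup p \<alpha>))"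

definition pmult_var :: "nat \<Rightarrow> rpoly \<Rightarrow> rpoly" where
  "pmult_var j p = (\<Sum>\<alpha>\<in>Poly_Mapping.keys p. Poly_Mapping.single (\<alpha> + Poly_Mapping.single j 1) (Poly_Mapping.lookup p \<alpha>))"

definition homog_polys :: "nat \<Rightarrow> nat \<Rightarrow> rpoly set" where
  "homog_polys k m = {p. \<forall>\<alpha>\<in>Poly_Mapping.keys p. Poly_Mapping.keys \<alpha> \<subseteq> {1..m} \<and> (\<Sum>i\<in>Poly_Mapping.keys \<alpha>. Poly_Mapping.lookup \<alpha> i) = k}"

definition L_minus :: "(nat \<Rightarrow> real) \<Rightarrow> nat \<Rightarrow> rpoly \<Rightarrow> rpoly" where
  "L_minus \<nu> m p = (\<Sum>j=1..m. pmult_var j (pderiv_var j (pderiv_var j p))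
                                + pscale (2 * \<nu> j) (pderiv_var j p))"

definition H_BG :: "(nat \<Rightarrow> real) \<Rightarrow> nat \<Rightarrow> nat \<Rightarrow> rpoly set" where
  "H_BG \<nu> k n = {p \<in> homog_polys k n. L_minus \<nu> n p = 0}"

definition CK_BG :: "(nat \<Rightarrow> real) \<Rightarrow> nat \<Rightarrow> nat \<Rightarrow> rpoly \<Rightarrow> rpoly" where
  "CK_BG \<nu> n k p = (\<Sum>j=0..k.
     pscale (Gamma (2 * \<nu> n) / (fact j * Gamma (real j + 2 * \<nu> n)))
       (((\<lambda>q. - pmult_var n (L_minus \<nu> (n - 1) q)) ^^ j) p))"

end

theory Submission
  imports Defs
begin

abbreviation lk :: "('a \<Rightarrow>\<^sub>0 'b::zero) \<Rightarrow> 'a \<Rightarrow> 'b" where "lk \<equiv> Poly_Mapping.lookup"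
abbreviation ee :: "nat \<Rightarrow> nat \<Rightarrow>\<^sub>0 nat" where "ee j \<equiv> Poly_Mapping.single j 1"

lemma lookup_pscale: "lk (pscale c p) a = c * lk p a"
  by (simp add: pscale_def map.rep_eq when_def)

lemma add_e_eq_iff:
  fixes b a :: "nat \<Rightarrow>\<^sub>0 nat"
  shows "(b + ee j = a) \<longleftrightarrow> (1 \<le> lk a j \<and> b = a - ee j)"
proof
  assume h: "b + ee j = a"
  show "1 \<le> lk a j \<and> b = a - ee j"
  proof
    have "lk a j = lk b j + 1" using h by (metis lookup_add lookup_single_eq)
    then show "1 \<le> lk a j" by simp
    show "b = a - ee j"
    proof (rule poly_mapping_eqI)
      fix x
      have "lk b x + lk (ee j) x = lk a x" using h by (metis lookup_add)
      then show "lk b x = lk (a - ee j) x"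
        by (simp add: lookup_minus lookup_single when_def split: if_splits)
    qed
  qed
next
  assume h: "1 \<le> lk a j \<and> b = a - ee j"
  show "b + ee j = a"
    using h by (auto simp: poly_mapping_eq_iff lookup_add lookup_minus fun_eq_iff lookup_single when_def)
qed

lemma lookup_pmult_var:
  "lk (pmult_var j p) a = (if 1 \<le> lk a j then lk p (a - ee j) else 0)"
proof -
  have "lk (pmult_var j p) a = (\<Sum>b\<in>Poly_Mapping.keys p. (if b = a - ee j then (if 1 \<le> lk a j then lk p b else 0) else 0))"
    unfolding pmult_var_def lookup_sum
    by (intro sum.cong refl) (simp only: lookup_single when_def add_e_eq_iff, auto)
  also have "\<dots> = (if 1 \<le> lk a j then lk p (a - ee j) else 0)"
    by (simp add: sum.delta' in_keys_iff)
  finally show ?thesis .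
qed

lemma lookup_pderiv_var:
  "lk (pderiv_var j p) a = (of_nat (lk a j) + 1) * lk p (a + ee j)"
proof -
  have "lk (pderiv_var j p) a = (\<Sum>b\<in>Poly_Mapping.keys p. (if b = a + ee j then (of_nat (lk a j) + 1) * lk p b else 0))"
    unfolding pderiv_var_def lookup_sum
  proof (intro sum.cong refl)
    fix b assume "b \<in> Poly_Mapping.keys p"
    show "lk (Poly_Mapping.single (b - ee j) (of_nat (lk b j) * lk p b)) a =
         (if b = a + ee j then (of_nat (lk a j) + 1) * lk p b else 0)"
    proof (cases "lk b j = 0")
      case True
      then have "b \<noteq> a + ee j" by (auto simp: lookup_add)
      then show ?thesis using True by (simp add: lookup_single when_def)
    next
      case False
      then have "(b - ee j = a) \<longleftrightarrow> b = a + ee j"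
        using add_e_eq_iff[of a j b] by auto
      moreover have "b = a + ee j \<Longrightarrow> lk b j = lk a j + 1"
        by (simp add: lookup_add)
      ultimately show ?thesis by (auto simp: lookup_single when_def)
    qed
  qed
  also have "\<dots> = (of_nat (lk a j) + 1) * lk p (a + ee j)"
    by (simp add: sum.delta' in_keys_iff)
  finally show ?thesis .
qed

lemma sub_add_e:
  fixes a :: "nat \<Rightarrow>\<^sub>0 nat"
  shows "1 \<le> lk a j \<Longrightarrow> a - ee j + ee j = a"
  using add_e_eq_iff by blast

lemma lookup_L_minus:
  "lk (L_minus \<nu> m p) a = (\<Sum>i=1..m. (of_nat (lk a i) + 1) * (of_nat (lk a i) + 2 * \<nu> i)
        * lk p (a + ee i))"
  unfolding L_minus_def lookup_sum
proof (intro sum.cong refl)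
  fix i
  have "lk (pmult_var i (pderiv_var i (pderiv_var i p))) a =
     of_nat (lk a i) * (of_nat (lk a i) + 1) * lk p (a + ee i)"
  proof (cases "1 \<le> lk a i")
    case True
    have l: "lk (a - ee i) i + 1 = lk a i"
      using True by (simp add: lookup_minus)
    have l2: "lk (a - ee i + ee i) i + 1 = lk a i + 1"
      using True by (simp add: lookup_minus lookup_add)
    have l3: "lk (a - ee i) i = lk a i - 1" by (simp add: lookup_minus)
    have "lk (pmult_var i (pderiv_var i (pderiv_var i p))) a =
       (of_nat (lk (a - ee i) i) + 1) * (of_nat (lk (a - ee i + ee i) i) + 1) * lk p (a - ee i + ee i + ee i)"
      using True by (simp add: lookup_pmult_var lookup_pderiv_var)
    also have "\<dots> = of_nat (lk a i) * (of_nat (lk a i) + 1) * lk p (a + ee i)"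
      using True l3 by (simp only: sub_add_e[OF True]) (simp add: of_nat_diff)
    finally show ?thesis .
  qed (simp add: lookup_pmult_var)
  then show "lk (pmult_var i (pderiv_var i (pderiv_var i p)) + pscale (2 * \<nu> i) (pderiv_var i p)) a =
         (of_nat (lk a i) + 1) * (of_nat (lk a i) + 2 * \<nu> i) * lk p (a + ee i)"
    by (simp add: lookup_add lookup_pscale lookup_pderiv_var algebra_simps)
qed


definition Top :: "(nat \<Rightarrow> real) \<Rightarrow> nat \<Rightarrow> rpoly \<Rightarrow> rpoly" where
  "Top \<nu> n = (\<lambda>q. - pmult_var n (L_minus \<nu> (n - 1) q))"

definition cc :: "(nat \<Rightarrow> real) \<Rightarrow> nat \<Rightarrow> nat \<Rightarrow> real" where
  "cc \<nu> n j = Gamma (2 * \<nu> n) / (fact j * Gamma (real j + 2 * \<nu> n))"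

definition wt :: "(nat \<Rightarrow> real) \<Rightarrow> (nat \<Rightarrow>\<^sub>0 nat) \<Rightarrow> nat \<Rightarrow> real" where
  "wt \<nu> b i = (of_nat (lk b i) + 1) * (of_nat (lk b i) + 2 * \<nu> i)"

definition degm :: "(nat \<Rightarrow>\<^sub>0 nat) \<Rightarrow> nat" where
  "degm a = (\<Sum>i\<in>Poly_Mapping.keys a. lk a i)"

lemma CK_BG_alt: "CK_BG \<nu> n k p = (\<Sum>j=0..k. pscale (cc \<nu> n j) ((Top \<nu> n ^^ j) p))"
  unfolding CK_BG_def Top_def cc_def ..

lemma lookup_L_minus': "lk (L_minus \<nu> m p) a = (\<Sum>i=1..m. wt \<nu> a i * lk p (a + ee i))"
  unfolding lookup_L_minus wt_def ..

lemma lookup_L_minus_split: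
  assumes "n \<ge> 1"
  shows "lk (L_minus \<nu> n p) a = (\<Sum>i=1..n-1. wt \<nu> a i * lk p (a + ee i)) + wt \<nu> a n * lk p (a + ee n)"
proof -
  have "{1..n} = insert n {1..n-1}" using assms by auto
  then show ?thesis unfolding lookup_L_minus' using assms by simp
qed

lemma lookup_Top:
  "lk (Top \<nu> n q) a = (if 1 \<le> lk a n then - (\<Sum>i=1..n-1. wt \<nu> (a - ee n) i * lk q (a - ee n + ee i)) else 0)"
  unfolding Top_def by (simp add: lookup_pmult_var lookup_L_minus')

lemma degm_sum:
  assumes "finite S" "Poly_Mapping.keys a \<subseteq> S"
  shows "degm a = (\<Sum>i\<in>S. lk a i)"
  unfolding degm_def using assms
  by (intro sum.mono_neutral_left) (auto simp: in_keys_iff)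

lemma keys_add_ee: "Poly_Mapping.keys (a + ee i) = insert i (Poly_Mapping.keys a)"
  by (auto simp: in_keys_iff lookup_add lookup_single when_def split: if_splits)

lemma degm_add_ee: "degm (a + ee i) = degm a + 1"
proof -
  let ?S = "insert i (Poly_Mapping.keys a)"
  have "degm (a + ee i) = (\<Sum>x\<in>?S. lk a x + lk (ee i) x)"
  proof -
    have k: "Poly_Mapping.keys (a + ee i) \<subseteq> ?S" using keys_add_ee by blast
    show ?thesis using degm_sum[OF _ k] by (simp add: lookup_add)
  qed
  also have "\<dots> = (\<Sum>x\<in>?S. lk a x) + (\<Sum>x\<in>?S. lk (ee i) x)" by (rule sum.distrib)
  also have "(\<Sum>x\<in>?S. lk a x) = degm a" using degm_sum[of ?S a] by (simp add: subset_insertI)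
  also have "(\<Sum>x\<in>?S. lk (ee i) x) = 1"
    by (simp add: lookup_single when_def sum.delta)
  finally show ?thesis .
qed

lemma degm_ge2:
  assumes "i \<noteq> j"
  shows "lk a i + lk a j \<le> degm a"
proof -
  let ?S = "Poly_Mapping.keys a \<union> {i, j}"
  have "degm a = (\<Sum>x\<in>?S. lk a x)" by (rule degm_sum) auto
  moreover have "(\<Sum>x\<in>{i,j}. lk a x) \<le> (\<Sum>x\<in>?S. lk a x)"
    by (rule sum_mono2) auto
  ultimately show ?thesis using assms by simp
qed

lemma homog_polys_iff:
  "p \<in> homog_polys k m \<longleftrightarrow> (\<forall>a. lk p a \<noteq> 0 \<longrightarrow> Poly_Mapping.keys a \<subseteq> {1..m} \<and> degm a = k)"
  unfolding homog_polys_def degm_def by (auto simp: in_keys_iff)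

lemma Tpow_lin:
  "lk ((Top \<nu> n ^^ j) (pscale x p + pscale y q)) a = x * lk ((Top \<nu> n ^^ j) p) a + y * lk ((Top \<nu> n ^^ j) q) a"
proof (induction j arbitrary: a)
  case 0
  then show ?case by (simp add: lookup_add lookup_pscale)
next
  case (Suc j)
  show ?case
    by (simp add: lookup_Top Suc.IH sum_distrib_left sum.distrib algebra_simps)
qed

lemma lookup_CK: "lk (CK_BG \<nu> n k p) a = (\<Sum>j=0..k. cc \<nu> n j * lk ((Top \<nu> n ^^ j) p) a)"
  unfolding CK_BG_alt by (simp add: lookup_sum lookup_pscale)

lemma CK_lin: "CK_BG \<nu> n k (pscale x p + pscale y q) = pscale x (CK_BG \<nu> n k p) + pscale y (CK_BG \<nu> n k q)"
  by (rule poly_mapping_eqI)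
     (simp add: lookup_CK Tpow_lin lookup_add lookup_pscale sum_distrib_left sum.distrib algebra_simps)


lemma sum_nonzero_obtain:
  assumes "(\<Sum>i\<in>S. f i * g i) \<noteq> (0::real)"
  obtains i where "i \<in> S" "g i \<noteq> 0"
  using assms by (metis (mono_tags, lifting) mult_zero_right sum.neutral)

lemma lookup_minus_ee_other: "i \<noteq> j \<Longrightarrow> lk (a - ee j) i = lk a i"
  by (simp add: lookup_minus lookup_single when_def)

lemma lookup_add_ee_other: "i \<noteq> j \<Longrightarrow> lk (a + ee j) i = lk a i"
  by (simp add: lookup_add lookup_single when_def)

lemma lookup_add_ee_same: "lk (a + ee j) j = lk a j + 1"
  by (simp add: lookup_add)

context
  fixes \<nu> :: "nat \<Rightarrow> real" and n :: nat
  assumes n2: "n \<ge> 2" and pos: "\<nu> n > 0"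
begin

lemma Top_homog:
  assumes "q \<in> homog_polys k n"
  shows "Top \<nu> n q \<in> homog_polys k n"
  unfolding homog_polys_iff
proof (intro allI impI)
  fix a assume nz: "lk (Top \<nu> n q) a \<noteq> 0"
  then have a1: "1 \<le> lk a n" by (auto simp: lookup_Top split: if_splits)
  let ?b = "a - ee n"
  have ab: "?b + ee n = a" using sub_add_e[OF a1] .
  from nz a1 have "(\<Sum>i=1..n-1. wt \<nu> ?b i * lk q (?b + ee i)) \<noteq> 0"
    by (simp add: lookup_Top)
  then obtain i where i: "i \<in> {1..n-1}" "lk q (?b + ee i) \<noteq> 0"
    by (rule sum_nonzero_obtain)
  with assms have h: "Poly_Mapping.keys (?b + ee i) \<subseteq> {1..n}" "degm (?b + ee i) = k"
    unfolding homog_polys_iff by blast+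
  have "Poly_Mapping.keys a = insert n (Poly_Mapping.keys ?b)"
    using ab keys_add_ee by metis
  also have "\<dots> \<subseteq> insert n (Poly_Mapping.keys (?b + ee i))" using keys_add_ee by blast
  finally have "Poly_Mapping.keys a \<subseteq> {1..n}" using h n2 by auto
  moreover have "degm a = k" using h(2) ab degm_add_ee by metis
  ultimately show "Poly_Mapping.keys a \<subseteq> {1..n} \<and> degm a = k" by blast
qed

lemma Tpow_homog: "p \<in> homog_polys k n \<Longrightarrow> (Top \<nu> n ^^ j) p \<in> homog_polys k n"
  by (induction j) (auto intro: Top_homog)

lemma homog_mono: "p \<in> homog_polys k (n - 1) \<Longrightarrow> p \<in> homog_polys k n"
  unfolding homog_polys_iff by force

lemma Tpow_supp:
  assumes p: "p \<in> homog_polys k (n - 1)"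
  shows "lk ((Top \<nu> n ^^ j) p) a \<noteq> 0 \<Longrightarrow> lk a n = j"
proof (induction j arbitrary: a)
  case 0
  then have "Poly_Mapping.keys a \<subseteq> {1..n-1}" using p unfolding homog_polys_iff by simp
  then have "n \<notin> Poly_Mapping.keys a" using n2 by auto
  then show ?case by (simp add: in_keys_iff)
next
  case (Suc j)
  then have a1: "1 \<le> lk a n" by (auto simp: lookup_Top split: if_splits)
  let ?b = "a - ee n"
  from Suc.prems a1 have "(\<Sum>i=1..n-1. wt \<nu> ?b i * lk ((Top \<nu> n ^^ j) p) (?b + ee i)) \<noteq> 0"
    by (simp add: lookup_Top)
  then obtain i where i: "i \<in> {1..n-1}" "lk ((Top \<nu> n ^^ j) p) (?b + ee i) \<noteq> 0"
    by (rule sum_nonzero_obtain)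
  have "lk (?b + ee i) n = j" using i(2) by (rule Suc.IH)
  moreover have "i \<noteq> n" using i by auto
  ultimately have "lk ?b n = j" by (metis lookup_add_ee_other)
  then show ?case using a1 by (simp add: lookup_minus)
qed

lemma lookup_CK2:
  assumes p: "p \<in> homog_polys k (n - 1)"
  shows "lk (CK_BG \<nu> n k p) a = (if lk a n \<le> k then cc \<nu> n (lk a n) * lk ((Top \<nu> n ^^ (lk a n)) p) a else 0)"
proof -
  have "lk (CK_BG \<nu> n k p) a = (\<Sum>j\<in>{0..k}. if j = lk a n then cc \<nu> n j * lk ((Top \<nu> n ^^ j) p) a else 0)"
    unfolding lookup_CK using Tpow_supp[OF p] by (intro sum.cong refl) fastforce
  then show ?thesis by (simp add: sum.delta')
qed

lemma Gamma_pos': "Gamma (real j + 2 * \<nu> n) > 0"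
  using pos by (intro Gamma_real_pos) simp

lemma cc_0: "cc \<nu> n 0 = 1"
  using Gamma_pos'[of 0] by (simp add: cc_def)

lemma cc_Suc: "cc \<nu> n (Suc A) * ((real A + 1) * (real A + 2 * \<nu> n)) = cc \<nu> n A"
proof -
  have p1: "real A + 2 * \<nu> n > 0" using pos by simp
  then have np: "real A + 2 * \<nu> n \<notin> \<int>\<^sub>\<le>\<^sub>0" using nonpos_Ints_nonpos by force
  have g: "Gamma (real (Suc A) + 2 * \<nu> n) = (real A + 2 * \<nu> n) * Gamma (real A + 2 * \<nu> n)"
    using Gamma_plus1[OF np] by (simp add: algebra_simps)
  have p2: "Gamma (real A + 2 * \<nu> n) > 0" by (rule Gamma_pos')
  define X where "X = (real A + 1) * (real A + 2 * \<nu> n)"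
  have X0: "X \<noteq> 0" using p1 unfolding X_def by simp
  have F: "fact (Suc A) * Gamma (real (Suc A) + 2 * \<nu> n) = (fact A * Gamma (real A + 2 * \<nu> n)) * X"
    unfolding g X_def by (simp add: algebra_simps)
  have "cc \<nu> n (Suc A) * X = Gamma (2 * \<nu> n) / ((fact A * Gamma (real A + 2 * \<nu> n)) * X) * X"
    unfolding cc_def F ..
  also have "\<dots> = cc \<nu> n A" unfolding cc_def using X0 by simp
  finally show ?thesis unfolding X_def .
qed


lemma CK_ker:
  assumes p: "p \<in> homog_polys k (n - 1)"
  shows "L_minus \<nu> n (CK_BG \<nu> n k p) = 0"
proof (rule poly_mapping_eqI)
  fix a :: "nat \<Rightarrow>\<^sub>0 nat"
  let ?A = "lk a n"
  let ?f = "CK_BG \<nu> n k p"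
  let ?T = "\<lambda>j. (Top \<nu> n ^^ j) p"
  let ?S = "\<Sum>i=1..n-1. wt \<nu> a i * lk (?T ?A) (a + ee i)"
  have n1: "n \<ge> 1" using n2 by simp
  have ci: "lk ?f (a + ee i) = (if ?A \<le> k then cc \<nu> n ?A * lk (?T ?A) (a + ee i) else 0)"
    if "i \<in> {1..n-1}" for i
  proof -
    have "n \<noteq> i" using that by auto
    then have e: "lk (a + ee i) n = ?A" by (rule lookup_add_ee_other)
    show ?thesis unfolding lookup_CK2[OF p] e ..
  qed
  have cn: "lk ?f (a + ee n) = (if ?A + 1 \<le> k then cc \<nu> n (?A + 1) * lk (?T (?A + 1)) (a + ee n) else 0)"
    unfolding lookup_CK2[OF p] lookup_add_ee_same ..
  have tn: "lk (?T (?A + 1)) (a + ee n) = - ?S"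
  proof -
    have "a + ee n - ee n = a" by simp
    moreover have "1 \<le> lk (a + ee n) n" unfolding lookup_add_ee_same by simp
    ultimately show ?thesis by (simp add: lookup_Top)
  qed
  have s1: "(\<Sum>i=1..n-1. wt \<nu> a i * lk ?f (a + ee i)) = (if ?A \<le> k then cc \<nu> n ?A * ?S else 0)"
  proof -
    have "(\<Sum>i=1..n-1. wt \<nu> a i * lk ?f (a + ee i)) =
          (\<Sum>i=1..n-1. (if ?A \<le> k then cc \<nu> n ?A else 0) * (wt \<nu> a i * lk (?T ?A) (a + ee i)))"
    proof (intro sum.cong refl)
      fix i assume i: "i \<in> {1..n-1}"
      show "wt \<nu> a i * lk ?f (a + ee i) = (if ?A \<le> k then cc \<nu> n ?A else 0) * (wt \<nu> a i * lk (?T ?A) (a + ee i))"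
        unfolding ci[OF i] by simp
    qed
    also have "\<dots> = (if ?A \<le> k then cc \<nu> n ?A * ?S else 0)"
      by (simp add: sum_distrib_left[symmetric])
    finally show ?thesis .
  qed
  have wn: "wt \<nu> a n = (real ?A + 1) * (real ?A + 2 * \<nu> n)" unfolding wt_def ..
  have L: "lk (L_minus \<nu> n ?f) a = (\<Sum>i=1..n-1. wt \<nu> a i * lk ?f (a + ee i)) + wt \<nu> a n * lk ?f (a + ee n)"
    by (rule lookup_L_minus_split[OF n1])
  consider "?A + 1 \<le> k" | "?A > k" | "?A = k" by linarith
  then show "lk (L_minus \<nu> n ?f) a = lk 0 a"
  proof cases
    case 1
    have "lk (L_minus \<nu> n ?f) a = cc \<nu> n ?A * ?S - (cc \<nu> n (Suc ?A) * ((real ?A + 1) * (real ?A + 2 * \<nu> n))) * ?S"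
      unfolding L s1 cn tn wn using 1 by (simp add: algebra_simps)
    then show ?thesis unfolding cc_Suc by simp
  next
    case 2
    then show ?thesis unfolding L s1 cn by simp
  next
    case 3
    have "?S = 0"
    proof (intro sum.neutral ballI)
      fix i assume i: "i \<in> {1..n-1}"
      show "wt \<nu> a i * lk (?T ?A) (a + ee i) = 0"
      proof (rule ccontr)
        assume "wt \<nu> a i * lk (?T ?A) (a + ee i) \<noteq> 0"
        then have nz: "lk (?T ?A) (a + ee i) \<noteq> 0" by simp
        have "degm (a + ee i) = k"
          using Tpow_homog[OF homog_mono[OF p], of ?A] nz unfolding homog_polys_iff by blast
        moreover have "lk (a + ee i) n = k" using Tpow_supp[OF p nz] 3 by simp
        moreover have "lk (a + ee i) i \<ge> 1" unfolding lookup_add_ee_same by simp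
        moreover have "i \<noteq> n" using i by auto
        ultimately show False using degm_ge2[of i n "a + ee i"] by simp
      qed
    qed
    then show ?thesis unfolding L s1 cn using 3 by simp
  qed
qed

lemma CK_recover:
  assumes p: "p \<in> homog_polys k (n - 1)"
  shows "lk p a = (if lk a n = 0 then lk (CK_BG \<nu> n k p) a else 0)"
proof (cases "lk a n = 0")
  case True
  then show ?thesis unfolding lookup_CK2[OF p] by (simp add: cc_0)
next
  case False
  then show ?thesis using Tpow_supp[OF p, of 0 a] by auto
qed

lemma CK_in_H:
  assumes p: "p \<in> homog_polys k (n - 1)"
  shows "CK_BG \<nu> n k p \<in> H_BG \<nu> k n"
proof -
  have "CK_BG \<nu> n k p \<in> homog_polys k n"
    unfolding homog_polys_iff
  proof (intro allI impI)
    fix a assume "lk (CK_BG \<nu> n k p) a \<noteq> 0"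
    then have "lk ((Top \<nu> n ^^ (lk a n)) p) a \<noteq> 0"
      unfolding lookup_CK2[OF p] by (auto split: if_splits)
    then show "Poly_Mapping.keys a \<subseteq> {1..n} \<and> degm a = k"
      using Tpow_homog[OF homog_mono[OF p], of "lk a n"] unfolding homog_polys_iff by blast
  qed
  then show ?thesis unfolding H_BG_def using CK_ker[OF p] by simp
qed

lemma CK_surj:
  assumes h: "h \<in> H_BG \<nu> k n"
  shows "\<exists>p\<in>homog_polys k (n - 1). h = CK_BG \<nu> n k p"
proof -
  have hh: "h \<in> homog_polys k n" and hL: "L_minus \<nu> n h = 0" using h unfolding H_BG_def by auto
  define p where "p = Abs_poly_mapping (\<lambda>a. if lk a n = 0 then lk h a else 0)"
  have fin: "finite {a. (if lk a n = 0 then lk h a else 0) \<noteq> 0}"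
    by (rule finite_subset[OF _ finite_lookup[of h]]) auto
  have lp: "lk p a = (if lk a n = 0 then lk h a else 0)" for a
    using lookup_Abs_poly_mapping[OF fin] unfolding p_def by simp
  have pH: "p \<in> homog_polys k (n - 1)"
    unfolding homog_polys_iff
  proof (intro allI impI)
    fix a assume "lk p a \<noteq> 0"
    then have a0: "lk a n = 0" and "lk h a \<noteq> 0" unfolding lp by (auto split: if_splits)
    then have ks: "Poly_Mapping.keys a \<subseteq> {1..n}" and "degm a = k" using hh unfolding homog_polys_iff by auto
    moreover have nk: "n \<notin> Poly_Mapping.keys a" using a0 by (simp add: in_keys_iff)
    moreover have "Poly_Mapping.keys a \<subseteq> {1..n - 1}"
    proof
      fix x assume x: "x \<in> Poly_Mapping.keys a"
      then have "x \<in> {1..n}" using ks by blast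
      moreover have "x \<noteq> n" using x nk by blast
      ultimately show "x \<in> {1..n - 1}" by auto
    qed
    ultimately show "Poly_Mapping.keys a \<subseteq> {1..n - 1} \<and> degm a = k" by blast
  qed
  let ?f = "CK_BG \<nu> n k p"
  have fL: "L_minus \<nu> n ?f = 0" by (rule CK_ker[OF pH])
  have n1: "n \<ge> 1" using n2 by simp
  have main: "\<forall>a::nat \<Rightarrow>\<^sub>0 nat. lk a n = m \<longrightarrow> lk h a = lk ?f a" for m
  proof (induction m)
    case 0
    show ?case
    proof (intro allI impI)
      fix a :: "nat \<Rightarrow>\<^sub>0 nat" assume "lk a n = 0"
      then show "lk h a = lk ?f a" using CK_recover[OF pH, of a] lp[of a] by simp
    qed
  next
    case (Suc m)
    show ?case
    proof (intro allI impI)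
      fix a :: "nat \<Rightarrow>\<^sub>0 nat" assume am: "lk a n = Suc m"
      let ?b = "a - ee n"
      have ab: "?b + ee n = a" using sub_add_e[of a n] am by simp
      have bm: "lk ?b n = m" using am by (simp add: lookup_minus)
      have eqs: "(\<Sum>i=1..n-1. wt \<nu> ?b i * lk h (?b + ee i)) = (\<Sum>i=1..n-1. wt \<nu> ?b i * lk ?f (?b + ee i))"
      proof (intro sum.cong refl)
        fix i assume "i \<in> {1..n-1}"
        then have "n \<noteq> i" by auto
        then have "lk (?b + ee i) n = m" using bm lookup_add_ee_other by metis
        then show "wt \<nu> ?b i * lk h (?b + ee i) = wt \<nu> ?b i * lk ?f (?b + ee i)"
          using Suc.IH by simp
      qed
      have e1: "(\<Sum>i=1..n-1. wt \<nu> ?b i * lk h (?b + ee i)) + wt \<nu> ?b n * lk h a = 0"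
        using lookup_L_minus_split[OF n1, of \<nu> h ?b] hL ab by simp
      have e2: "(\<Sum>i=1..n-1. wt \<nu> ?b i * lk ?f (?b + ee i)) + wt \<nu> ?b n * lk ?f a = 0"
        using lookup_L_minus_split[OF n1, of \<nu> ?f ?b] fL ab by simp
      have "wt \<nu> ?b n > 0" unfolding wt_def using pos by (intro mult_pos_pos) auto
      moreover have "wt \<nu> ?b n * lk h a = wt \<nu> ?b n * lk ?f a" using e1 e2 eqs by linarith
      ultimately show "lk h a = lk ?f a" by simp
    qed
  qed
  have "h = ?f" by (rule poly_mapping_eqI) (use main in blast)
  then show ?thesis using pH by blast
qed

end

theorem theorem4p2:
  fixes n k :: nat and \<nu> :: "nat \<Rightarrow> real"
  assumes "n \<ge> 2" and "\<forall>j\<in>{1..n}. \<nu> j > 0"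
  shows "(\<forall>p\<in>homog_polys k (n - 1). \<forall>q\<in>homog_polys k (n - 1). \<forall>a b :: real.
            CK_BG \<nu> n k (pscale a p + pscale b q) = pscale a (CK_BG \<nu> n k p) + pscale b (CK_BG \<nu> n k q))
         \<and> bij_betw (CK_BG \<nu> n k) (homog_polys k (n - 1)) (H_BG \<nu> k n)"
proof (intro conjI ballI allI)
  have pos: "\<nu> n > 0" using assms by auto
  note n2 = assms(1)
  show "CK_BG \<nu> n k (pscale a p + pscale b q) = pscale a (CK_BG \<nu> n k p) + pscale b (CK_BG \<nu> n k q)"
    for p q a b by (rule CK_lin)
  show "bij_betw (CK_BG \<nu> n k) (homog_polys k (n - 1)) (H_BG \<nu> k n)"
    unfolding bij_betw_def
  proof (intro conjI)
    show "inj_on (CK_BG \<nu> n k) (homog_polys k (n - 1))"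
    proof (rule inj_onI)
      fix p q assume p: "p \<in> homog_polys k (n - 1)" and q: "q \<in> homog_polys k (n - 1)"
        and e: "CK_BG \<nu> n k p = CK_BG \<nu> n k q"
      show "p = q"
        by (rule poly_mapping_eqI) (simp add: CK_recover[where \<nu>=\<nu> and n=n, OF n2 pos p] CK_recover[where \<nu>=\<nu> and n=n, OF n2 pos q] e)
    qed
    show "CK_BG \<nu> n k ` homog_polys k (n - 1) = H_BG \<nu> k n"
      using CK_in_H[where \<nu>=\<nu> and n=n, OF n2 pos] CK_surj[where \<nu>=\<nu> and n=n, OF n2 pos] by blast
  qed
qed

end
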